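(* The class PosLimSup is closed under $\min$, and the class AsLimInf is closed under $\max$.
   Context: A probabilistic weighted automaton over a finite alphabet $\Sigma$ is a tuple $A=(Q,\rho_I,\Sigma,\delta,\gamma)$ where $Q$ is a finite set of states, $\rho_I$ is a probability distribution on $Q$, $\delta:Q\times\Sigma\to\mathcal D(Q)$ assigns to each state and letter a probability distribution on $Q$, and $\gamma:Q\times\Sigma\times Q\to\mathbb Q$ is a weight function. A run over an infinite word $w=\sigma_1\sigma_2\dots$ is a sequence $r=q_0\sigma_1q_1\sigma_2\dots$ with $\rho_I(q_0)>0$ and $\delta(q_i,\sigma_{i+1})(q_{i+1})>0$ for all $i$; its weight sequence is $\gamma(r)=v_0v_1\dots$ with $v_i=\gamma(q_i,\sigma_{i+1},q_{i+1})$. For each $w$, the probabilities of finite run prefixes induce a probability measure $\mathbb P^A$ on runs over $w$. For a value function $\mathrm{Val}$, positive semantics: $L^{>0}_A(w)=\sup\{\eta\mid \mathbb P^A(\{r:\mathrm{Val}(\gamma(r))\ge\eta\})>0\}$; almost-sure semantics: $L^{=1}_A(w)=\sup\{\eta\mid \mathbb P^A(\{r:\mathrm{Val}(\gamma(r))\ge\eta\})=1\}$. $\mathsf{LimSup}(v)=\limsup_n v_n$, $\mathsf{LimInf}(v)=\liminf_n v_n$. PosLimSup is the class of $\mathsf{LimSup}$-automata under positive semantics; AsLimInf is the class of $\mathsf{LimInf}$-automata under almost-sure semantics. A class $\mathcal C$ is closed under $\max$ (resp. $\min$) if for any $A_1,A_2\in\mathcal C$ over the same alphabet there is $A\in\mathcal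 C$ with $L_A(w)=\max\{L_{A_1}(w),L_{A_2}(w)\}$ (resp. $\min$) for all words $w$. *)

theory Defs
  imports "HOL-Probability.Probability"
begin

text \<open>States are natural numbers drawn from a finite set Q (so that automata with different
 numbers of states can be quantified over uniformly).  An infinite word
 sigma_1 sigma_2 ... is a function w :: nat => 'a with w i = sigma_(i+1); a run
 q_0 q_1 ... is a function r :: nat => nat with r i = q_i.\<close>

record 'a pwa =
  states :: "nat set"
  init   :: "nat pmf"
  trans  :: "nat \<Rightarrow> 'a \<Rightarrow> nat pmf"
  wt     :: "nat \<Rightarrow> 'a \<Rightarrow> nat \<Rightarrow> rat"

definition wf_pwa :: "'a pwa \<Rightarrow> bool" where
  "wf_pwa A \<longleftrightarrow> finite (states A) \<and> set_pmf (init A) \<subseteq> states A \<and>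
     (\<forall>q\<in>states A. \<forall>a. set_pmf (trans A q a) \<subseteq> states A)"

definition run_prob :: "'a pwa \<Rightarrow> (nat \<Rightarrow> 'a) \<Rightarrow> (nat \<Rightarrow> nat) measure" where
  "run_prob A w = (SOME M. prob_space M \<and>
      sets M = sets (PiM (UNIV::nat set) (\<lambda>_. count_space (UNIV::nat set))) \<and>
      (\<forall>n qs. measure M {r. \<forall>i\<le>n. r i = qs i} =
         pmf (init A) (qs 0) * (\<Prod>i<n. pmf (trans A (qs i) (w i)) (qs (Suc i)))))"

definition wseq :: "'a pwa \<Rightarrow> (nat \<Rightarrow> 'a) \<Rightarrow> (nat \<Rightarrow> nat) \<Rightarrow> nat \<Rightarrow> rat" where
  "wseq A w r n = wt A (r n) (w n) (r (Suc n))"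

definition LimSupV :: "(nat \<Rightarrow> rat) \<Rightarrow> ereal" where
  "LimSupV v = limsup (\<lambda>n. ereal (real_of_rat (v n)))"

definition LimInfV :: "(nat \<Rightarrow> rat) \<Rightarrow> ereal" where
  "LimInfV v = liminf (\<lambda>n. ereal (real_of_rat (v n)))"

definition L_pos :: "((nat \<Rightarrow> rat) \<Rightarrow> ereal) \<Rightarrow> 'a pwa \<Rightarrow> (nat \<Rightarrow> 'a) \<Rightarrow> ereal" where
  "L_pos Val A w = Sup {ereal \<eta> | \<eta>.
      measure (run_prob A w) {r. Val (wseq A w r) \<ge> ereal \<eta>} > 0}"

definition L_as :: "((nat \<Rightarrow> rat) \<Rightarrow> ereal) \<Rightarrow> 'a pwa \<Rightarrow> (nat \<Rightarrow> 'a) \<Rightarrow> ereal" where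
  "L_as Val A w = Sup {ereal \<eta> | \<eta>.
      measure (run_prob A w) {r. Val (wseq A w r) \<ge> ereal \<eta>} = 1}"

end

theory Submission
  imports Defs
begin

definition SP :: "(nat \<Rightarrow> nat) measure" where "SP = PiM UNIV (\<lambda>_. count_space UNIV)"
definition cyl :: "nat \<Rightarrow> (nat\<Rightarrow>nat) \<Rightarrow> (nat\<Rightarrow>nat) set" where "cyl n qs = {r. \<forall>i\<le>n. r i = qs i}"
definition cylp :: "nat pmf \<Rightarrow> (nat \<Rightarrow> nat \<Rightarrow> nat pmf) \<Rightarrow> nat \<Rightarrow> (nat\<Rightarrow>nat) \<Rightarrow> real" where
 "cylp p K n qs = pmf p (qs 0) * (\<Prod>i<n. pmf (K i (qs i)) (qs (Suc i)))"
definition spec where "spec p K M \<longleftrightarrow> prob_space M \<and> sets M = sets SP \<and> (\<forall>n qs. measure M (cyl n qs) = cylp p K n qs)"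

lemma run_prob_spec_def: "run_prob A w = (SOME M. spec (init A) (\<lambda>i q. trans A q (w i)) M)"
  unfolding run_prob_def spec_def SP_def cyl_def cylp_def by simp

lemma space_SP[simp]: "space SP = UNIV"
  by (simp add: SP_def space_PiM PiE_UNIV_domain)

lemma cyl_sets[measurable]: "cyl n qs \<in> sets SP"
proof -
  have "cyl n qs = {r\<in>space SP. \<forall>i\<in>{..n}. r i = qs i}" by (auto simp: cyl_def)
  also have "\<dots> \<in> sets SP" unfolding SP_def by measurable
  finally show ?thesis .
qed

definition Om where "Om p K = PiM (UNIV :: (nat\<times>nat) option set)
   (\<lambda>j. measure_pmf (case j of None \<Rightarrow> p | Some (i,q) \<Rightarrow> K i q))"

primrec Rn :: "((nat\<times>nat) option \<Rightarrow> nat) \<Rightarrow> nat \<Rightarrow> nat" where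
  "Rn \<omega> 0 = \<omega> None"
| "Rn \<omega> (Suc n) = \<omega> (Some (n, Rn \<omega> n))"

lemma space_Om[simp]: "space (Om p K) = UNIV"
  by (simp add: Om_def space_PiM PiE_UNIV_domain)

lemma Rn_meas: "(\<lambda>\<omega>. Rn \<omega> n) \<in> measurable (Om p K) (count_space UNIV)"
proof (induction n)
  case 0
  have "(\<lambda>\<omega>. \<omega> None) \<in> measurable (Om p K) (measure_pmf p)"
    unfolding Om_def using measurable_component_singleton[of None UNIV "\<lambda>j. measure_pmf (case j of None \<Rightarrow> p | Some (i,q) \<Rightarrow> K i q)"] by simp
  then show ?case by (simp add: measurable_cong_sets)
next
  case (Suc n)
  have hq: "(\<lambda>\<omega>. \<omega> (Some (n, q))) \<in> measurable (Om p K) (count_space UNIV)" for q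
  proof -
    have "(\<lambda>\<omega>. \<omega> (Some (n, q))) \<in> measurable (Om p K) (measure_pmf (K n q))"
      unfolding Om_def using measurable_component_singleton[of "Some (n,q)" UNIV "\<lambda>j. measure_pmf (case j of None \<Rightarrow> p | Some (i,q) \<Rightarrow> K i q)"] by simp
    then show ?thesis by (simp add: measurable_cong_sets)
  qed
  have "(\<lambda>\<omega>. (\<lambda>q \<omega>. \<omega> (Some (n, q))) (Rn \<omega> n) \<omega>) \<in> measurable (Om p K) (count_space UNIV)"
    by (rule measurable_compose_countable'[OF hq Suc]) simp
  then show ?case by simp
qed

lemma R_meas: "(\<lambda>\<omega>. Rn \<omega>) \<in> measurable (Om p K) SP"
  unfolding SP_def
  using measurable_PiM_single'[of UNIV "\<lambda>n \<omega>. Rn \<omega> n" "Om p K" "\<lambda>_. count_space UNIV"]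
  by (simp add: Rn_meas PiE_UNIV_domain)

lemma R_pre: "(\<lambda>\<omega>. Rn \<omega>) -` cyl n qs = {\<omega>. \<omega> None = qs 0 \<and> (\<forall>i<n. \<omega> (Some (i, qs i)) = qs (Suc i))}"
proof (induction n)
  case 0 then show ?case by (auto simp: cyl_def)
next
  case (Suc n)
  have "cyl (Suc n) qs = cyl n qs \<inter> {r. r (Suc n) = qs (Suc n)}"
    by (auto simp: cyl_def le_Suc_eq)
  then have "(\<lambda>\<omega>. Rn \<omega>) -` cyl (Suc n) qs = ((\<lambda>\<omega>. Rn \<omega>) -` cyl n qs) \<inter> {\<omega>. Rn \<omega> (Suc n) = qs (Suc n)}"
    by auto
  also have "\<dots> = {\<omega>. \<omega> None = qs 0 \<and> (\<forall>i<Suc n. \<omega> (Some (i, qs i)) = qs (Suc i))}"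
    unfolding Suc
  proof (intro set_eqI iffI)
    fix \<omega> assume a: "\<omega> \<in> {\<omega>. \<omega> None = qs 0 \<and> (\<forall>i<n. \<omega> (Some (i, qs i)) = qs (Suc i))} \<inter> {\<omega>. Rn \<omega> (Suc n) = qs (Suc n)}"
    then have "\<omega> \<in> (\<lambda>\<omega>. Rn \<omega>) -` cyl n qs" using Suc by auto
    then have "Rn \<omega> n = qs n" by (auto simp: cyl_def)
    then show "\<omega> \<in> {\<omega>. \<omega> None = qs 0 \<and> (\<forall>i<Suc n. \<omega> (Some (i, qs i)) = qs (Suc i))}"
      using a by (auto simp: less_Suc_eq)
  next
    fix \<omega> assume a: "\<omega> \<in> {\<omega>. \<omega> None = qs 0 \<and> (\<forall>i<Suc n. \<omega> (Some (i, qs i)) = qs (Suc i))}"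
    then have "\<omega> \<in> (\<lambda>\<omega>. Rn \<omega>) -` cyl n qs" using Suc by auto
    then have "Rn \<omega> n = qs n" by (auto simp: cyl_def)
    then show "\<omega> \<in> {\<omega>. \<omega> None = qs 0 \<and> (\<forall>i<n. \<omega> (Some (i, qs i)) = qs (Suc i))} \<inter> {\<omega>. Rn \<omega> (Suc n) = qs (Suc n)}"
      using a by auto
  qed
  finally show ?case .
qed

lemma spec_distr: "spec p K (distr (Om p K) SP (\<lambda>\<omega>. Rn \<omega>))"
proof -
  let ?Mj = "\<lambda>j. measure_pmf (case j of None \<Rightarrow> p | Some (i,q) \<Rightarrow> K i q)"
  let ?M = "distr (Om p K) SP (\<lambda>\<omega>. Rn \<omega>)"
  interpret O: prob_space "Om p K" unfolding Om_def by (intro prob_space_PiM) (auto intro: prob_space_measure_pmf)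
  have "measure ?M (cyl n qs) = cylp p K n qs" for n qs
  proof -
    define J where "J = insert None ((\<lambda>i. Some (i, qs i)) ` {..<n})"
    define X :: "(nat\<times>nat) option \<Rightarrow> nat set" where "X = (\<lambda>j. case j of None \<Rightarrow> {qs 0} | Some (i, q) \<Rightarrow> {qs (Suc i)})"
    have fJ: "finite J" by (simp add: J_def)
    have eqs: "(\<lambda>\<omega>. Rn \<omega>) -` cyl n qs \<inter> space (Om p K) = prod_emb UNIV ?Mj J (Pi\<^sub>E J X)"
      unfolding R_pre by (auto simp: prod_emb_iff J_def X_def PiE_iff)
    have "emeasure ?M (cyl n qs) = emeasure (Om p K) (prod_emb UNIV ?Mj J (Pi\<^sub>E J X))"
      using emeasure_distr[OF R_meas, of "cyl n qs"] eqs by simp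
    also have "\<dots> = (\<Prod>j\<in>J. emeasure (?Mj j) (X j))"
      unfolding Om_def by (rule emeasure_PiM_emb) (auto simp: fJ prob_space_measure_pmf)
    also have "\<dots> = emeasure (?Mj None) (X None) * (\<Prod>j\<in>(\<lambda>i. Some (i, qs i)) ` {..<n}. emeasure (?Mj j) (X j))"
      unfolding J_def by (subst prod.insert) auto
    also have "\<dots> = ennreal (pmf p (qs 0)) * (\<Prod>i<n. ennreal (pmf (K i (qs i)) (qs (Suc i))))"
      by (subst prod.reindex) (auto simp: inj_on_def X_def emeasure_pmf_single)
    also have "\<dots> = ennreal (cylp p K n qs)"
      by (simp add: cylp_def prod_ennreal ennreal_mult' prod_nonneg)
    finally show ?thesis by (simp add: measure_def cylp_def prod_nonneg)
  qed
  moreover have "prob_space ?M" by (rule O.prob_space_distr) (rule R_meas)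
  ultimately show ?thesis unfolding spec_def by auto
qed

lemma chain_exists: "\<exists>M. spec p K M"
  using spec_distr by blast


lemma prod_emb_cyl:
  assumes J: "J \<subseteq> {..n}"
  shows "prod_emb UNIV (\<lambda>_. count_space UNIV) J (Pi\<^sub>E J A) =
    (\<Union>qs\<in>{qs \<in> {..n} \<rightarrow>\<^sub>E UNIV. \<forall>i\<in>J. qs i \<in> A i}. cyl n qs)"
proof (intro set_eqI iffI)
  fix r assume "r \<in> prod_emb UNIV (\<lambda>_. count_space UNIV) J (Pi\<^sub>E J A)"
  then have r: "\<forall>i\<in>J. r i \<in> A i" by (auto simp: prod_emb_iff PiE_iff)
  show "r \<in> (\<Union>qs\<in>{qs \<in> {..n} \<rightarrow>\<^sub>E UNIV. \<forall>i\<in>J. qs i \<in> A i}. cyl n qs)"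
    using r J by (intro UN_I[of "restrict r {..n}"]) (auto simp: cyl_def)
next
  fix r assume "r \<in> (\<Union>qs\<in>{qs \<in> {..n} \<rightarrow>\<^sub>E UNIV. \<forall>i\<in>J. qs i \<in> A i}. cyl n qs)"
  then obtain qs where "\<forall>i\<in>J. qs i \<in> A i" "r \<in> cyl n qs" by auto
  then show "r \<in> prod_emb UNIV (\<lambda>_. count_space UNIV) J (Pi\<^sub>E J A)"
    using J by (auto simp: prod_emb_iff PiE_iff cyl_def subset_eq)
qed

lemma spec_emb:
  assumes M: "spec p K M" and J: "J \<subseteq> {..n}"
  shows "emeasure M (prod_emb UNIV (\<lambda>_. count_space UNIV) J (Pi\<^sub>E J A)) =
    (\<integral>\<^sup>+qs. ennreal (cylp p K n qs) \<partial>count_space {qs \<in> {..n} \<rightarrow>\<^sub>E UNIV. \<forall>i\<in>J. qs i \<in> A i})"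
proof -
  let ?Q = "{qs \<in> {..n} \<rightarrow>\<^sub>E UNIV. \<forall>i\<in>J. qs i \<in> A i}"
  interpret prob_space M using M by (simp add: spec_def)
  have sM: "sets M = sets SP" using M by (simp add: spec_def)
  have cQ: "countable ?Q"
    by (rule countable_subset[OF _ countable_PiE[of "{..n}" "\<lambda>_. UNIV::nat set"]]) auto
  have dj: "disjoint_family_on (cyl n) ?Q"
  unfolding disjoint_family_on_def proof (intro ballI impI)
    fix a b assume aQ: "a \<in> ?Q" and bQ: "b \<in> ?Q" and ne: "a \<noteq> b"
    from ne obtain i where i: "a i \<noteq> b i" by (metis ext)
    have aE: "a \<in> {..n} \<rightarrow>\<^sub>E UNIV" using aQ by simp
    have bE: "b \<in> {..n} \<rightarrow>\<^sub>E UNIV" using bQ by simp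
    have "i \<le> n"
    proof (rule ccontr)
      assume "\<not> i \<le> n"
      then have "i \<notin> {..n}" by simp
      then have "a i = undefined" "b i = undefined"
        using PiE_arb[OF aE] PiE_arb[OF bE] by blast+
      then show False using i by simp
    qed
    with i show "cyl n a \<inter> cyl n b = {}" by (auto simp: cyl_def)
  qed
  have "emeasure M (prod_emb UNIV (\<lambda>_. count_space UNIV) J (Pi\<^sub>E J A)) = emeasure M (\<Union>(cyl n ` ?Q))"
    by (simp add: prod_emb_cyl[OF J])
  also have "\<dots> = (\<integral>\<^sup>+qs. emeasure M (cyl n qs) \<partial>count_space ?Q)"
    by (rule emeasure_UN_countable[OF _ cQ dj]) (simp add: sM)
  also have "\<dots> = (\<integral>\<^sup>+qs. ennreal (cylp p K n qs) \<partial>count_space ?Q)"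
    using M by (simp add: spec_def emeasure_eq_measure)
  finally show ?thesis .
qed

lemma spec_unique:
  assumes M: "spec p K M" and M': "spec p K M'"
  shows "M = M'"
proof (rule measure_eqI_PiM_infinite[where I=UNIV and M="\<lambda>_. count_space UNIV"])
  show "sets M = sets (PiM UNIV (\<lambda>_. count_space UNIV))" using M by (simp add: spec_def SP_def)
  show "sets M' = sets (PiM UNIV (\<lambda>_. count_space UNIV))" using M' by (simp add: spec_def SP_def)
  show "finite_measure M" using M by (auto simp: spec_def prob_space_def)
  fix A :: "nat \<Rightarrow> nat set" and J :: "nat set" assume J: "finite J"
  then have JJ: "J \<subseteq> {..Max (insert 0 J)}" by auto
  show "emeasure M (prod_emb UNIV (\<lambda>_. count_space UNIV) J (Pi\<^sub>E J A)) = emeasure M' (prod_emb UNIV (\<lambda>_. count_space UNIV) J (Pi\<^sub>E J A))"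
    by (simp only: spec_emb[OF M JJ] spec_emb[OF M' JJ])
qed

lemma spec_run_prob: "spec (init A) (\<lambda>i q. trans A q (w i)) (run_prob A w)"
  unfolding run_prob_spec_def by (rule someI_ex) (rule chain_exists)

lemma Om_AE_coord:
  "AE \<omega> in Om p K. \<omega> j \<in> set_pmf (case j of None \<Rightarrow> p | Some (i,q) \<Rightarrow> K i q)"
proof -
  let ?Mj = "\<lambda>j. measure_pmf (case j of None \<Rightarrow> p | Some (i,q) \<Rightarrow> K i q)"
  let ?X = "UNIV - set_pmf (case j of None \<Rightarrow> p | Some (i,q) \<Rightarrow> K i q)"
  have eq: "{\<omega>. \<omega> j \<notin> set_pmf (case j of None \<Rightarrow> p | Some (i,q) \<Rightarrow> K i q)} = prod_emb UNIV ?Mj {j} (Pi\<^sub>E {j} (\<lambda>_. ?X))"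
    by (auto simp: prod_emb_iff PiE_iff)
  have "emeasure (Om p K) (prod_emb UNIV ?Mj {j} (Pi\<^sub>E {j} (\<lambda>_. ?X))) = (\<Prod>i\<in>{j}. emeasure (?Mj i) ?X)"
    unfolding Om_def by (rule emeasure_PiM_emb) (auto simp: prob_space_measure_pmf)
  also have "\<dots> = 0"
    by (simp add: measure_pmf.emeasure_eq_measure measure_pmf_zero_iff)
  finally have "prod_emb UNIV ?Mj {j} (Pi\<^sub>E {j} (\<lambda>_. ?X)) \<in> null_sets (Om p K)"
    unfolding Om_def by (auto intro!: null_setsI)
  then show ?thesis
    by (rule AE_I') (auto simp: eq[symmetric])
qed

lemma spec_AE:
  assumes M: "spec p K M" and p: "set_pmf p \<subseteq> S" and K: "\<And>i q. q \<in> S \<Longrightarrow> set_pmf (K i q) \<subseteq> S"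
  shows "AE r in M. \<forall>n. r n \<in> S"
proof -
  have M_eq: "M = distr (Om p K) SP (\<lambda>\<omega>. Rn \<omega>)" using spec_unique[OF M spec_distr] .
  have "AE \<omega> in Om p K. \<forall>j. \<omega> j \<in> set_pmf (case j of None \<Rightarrow> p | Some (i,q) \<Rightarrow> K i q)"
    unfolding AE_all_countable by (intro allI Om_AE_coord)
  then have "AE \<omega> in Om p K. \<forall>n. Rn \<omega> n \<in> S"
  proof (rule AE_mp, intro AE_I2 impI allI)
    fix \<omega> n assume a: "\<forall>j. \<omega> j \<in> set_pmf (case j of None \<Rightarrow> p | Some (i,q) \<Rightarrow> K i q)"
    show "Rn \<omega> n \<in> S"
    proof (induction n)
      case 0 then show ?case using a[rule_format, of None] p by auto
    next
      case (Suc n) then show ?case using a[rule_format, of "Some (n, Rn \<omega> n)"] K[of "Rn \<omega> n" n] by auto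
    qed
  qed
  moreover have "{r \<in> space SP. \<forall>n. r n \<in> S} \<in> sets SP"
    unfolding SP_def by measurable
  ultimately show ?thesis
    unfolding M_eq by (subst AE_distr_iff[OF R_meas]) auto
qed

lemma freq_seq_iff: "frequently P sequentially \<longleftrightarrow> infinite {n. P n}"
  by (simp add: frequently_cofinite[symmetric] cofinite_eq_sequentially)

lemma ev_seq_iff: "eventually P sequentially \<longleftrightarrow> finite {n. \<not> P n}"
  by (simp add: eventually_cofinite[symmetric] cofinite_eq_sequentially)

lemma limsup_fin_iff:
  fixes f :: "nat \<Rightarrow> ereal"
  assumes fin: "finite (range f)"
  shows "c \<le> limsup f \<longleftrightarrow> frequently (\<lambda>n. c \<le> f n) sequentially"
proof
  assume c: "c \<le> limsup f"
  show "frequently (\<lambda>n. c \<le> f n) sequentially"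
  proof (rule ccontr)
    assume "\<not> frequently (\<lambda>n. c \<le> f n) sequentially"
    then have ev: "eventually (\<lambda>n. f n < c) sequentially"
      by (simp add: not_frequently not_le)
    let ?V = "{v \<in> range f. v < c}"
    have "\<exists>n. f n < c" using ev eventually_sequentially by auto
    then have ne: "?V \<noteq> {}" by auto
    have fV: "finite ?V" using fin by simp
    have "Max ?V < c" using Max_in[OF fV ne] by auto
    moreover have "eventually (\<lambda>n. f n \<le> Max ?V) sequentially"
      using ev by eventually_elim (auto intro!: Max_ge fV)
    then have "limsup f \<le> Max ?V" by (rule Limsup_bounded)
    ultimately show False using c by simp
  qed
next
  assume fr: "frequently (\<lambda>n. c \<le> f n) sequentially"
  show "c \<le> limsup f"
  proof (rule ccontr)
    assume "\<not> c \<le> limsup f"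
    then have "eventually (\<lambda>n. f n < c) sequentially" by (intro Limsup_lessD) simp
    then have "\<not> frequently (\<lambda>n. c \<le> f n) sequentially"
      by (simp add: not_frequently not_le)
    then show False using fr by simp
  qed
qed

lemma liminf_fin_iff:
  fixes f :: "nat \<Rightarrow> ereal"
  assumes fin: "finite (range f)"
  shows "c \<le> liminf f \<longleftrightarrow> eventually (\<lambda>n. c \<le> f n) sequentially"
proof
  assume c: "c \<le> liminf f"
  let ?V = "{v \<in> range f. v < c}"
  show "eventually (\<lambda>n. c \<le> f n) sequentially"
  proof (cases "?V = {}")
    case True
    then show ?thesis by (auto simp: not_less intro!: always_eventually)
  next
    case False
    have fV: "finite ?V" using fin by simp
    have "Max ?V < c" using Max_in[OF fV False] by auto
    then have "eventually (\<lambda>n. Max ?V < f n) sequentially"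
      using c le_Liminf_iff by blast
    then show ?thesis
    proof eventually_elim
      case (elim n)
      show ?case
      proof (rule ccontr)
        assume "\<not> c \<le> f n"
        then have "f n \<in> ?V" by auto
        then have "f n \<le> Max ?V" using Max_ge[OF fV] by blast
        then show False using elim by simp
      qed
    qed
  qed
next
  assume "eventually (\<lambda>n. c \<le> f n) sequentially"
  then show "c \<le> liminf f" by (rule Liminf_bounded)
qed

definition upd :: "rat set \<Rightarrow> rat set \<Rightarrow> rat \<Rightarrow> rat \<Rightarrow> rat set" where
  "upd W F a b = {t\<in>W. (t \<notin> F \<and> t \<le> a) \<or> (t \<in> F \<and> \<not> t \<le> b)}"

definition out :: "rat set \<Rightarrow> rat set \<Rightarrow> rat \<Rightarrow> rat" where
  "out W F b = Max (insert (Min W) {t\<in>F. t \<le> b})"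

primrec fl :: "rat set \<Rightarrow> (nat\<Rightarrow>rat) \<Rightarrow> (nat\<Rightarrow>rat) \<Rightarrow> nat \<Rightarrow> rat set" where
  "fl W x y 0 = {}"
| "fl W x y (Suc n) = upd W (fl W x y n) (x n) (y n)"

definition co :: "rat set \<Rightarrow> (nat\<Rightarrow>rat) \<Rightarrow> (nat\<Rightarrow>rat) \<Rightarrow> nat \<Rightarrow> rat" where
  "co W x y n = out W (fl W x y n) (y n)"

lemma fl_sub: "fl W x y n \<subseteq> W"
  by (cases n) (auto simp: upd_def)

lemma upd_sub: "upd W F a b \<subseteq> W" by (auto simp: upd_def)

lemma out_in:
  assumes "finite W" "W \<noteq> {}" "F \<subseteq> W"
  shows "out W F b \<in> W"
proof -
  have "finite F" using assms finite_subset by blast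
  then have fin: "finite (insert (Min W) {t\<in>F. t \<le> b})" by simp
  have 1: "out W F b \<in> insert (Min W) {t\<in>F. t \<le> b}" unfolding out_def by (rule Max_in[OF fin]) simp
  have 2: "Min W \<in> W" using Min_in[OF assms(1,2)] .
  show ?thesis
  proof (cases "out W F b = Min W")
    case True then show ?thesis using 2 by simp
  next
    case False then have "out W F b \<in> F" using 1 by simp
    then show ?thesis using assms(3) by blast
  qed
qed

lemma co_in: "finite W \<Longrightarrow> W \<noteq> {} \<Longrightarrow> co W x y n \<in> W"
  unfolding co_def by (rule out_in) (auto simp: fl_sub)

lemma out_ge_iff:
  assumes "finite W" "F \<subseteq> W"
  shows "\<theta> \<le> out W F b \<longleftrightarrow> \<theta> \<le> Min W \<or> (\<exists>t\<in>F. t \<le> b \<and> \<theta> \<le> t)"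
proof -
  have "finite F" using assms finite_subset by blast
  then have fin: "finite (insert (Min W) {t\<in>F. t \<le> b})" by simp
  show ?thesis unfolding out_def by (subst Max_ge_iff[OF fin]) auto
qed

lemma co_core:
  assumes fW: "finite W" and neW: "W \<noteq> {}" and xW: "\<And>n. x n \<in> W" and yW: "\<And>n. y n \<in> W"
    and th: "\<theta> \<in> W"
  shows "infinite {n. \<theta> \<le> co W x y n} \<longleftrightarrow> infinite {n. \<theta> \<le> x n} \<and> infinite {n. \<theta> \<le> y n}"
proof
  assume inf: "infinite {n. \<theta> \<le> co W x y n}"
  show "infinite {n. \<theta> \<le> x n} \<and> infinite {n. \<theta> \<le> y n}"
  proof (cases "\<theta> \<le> Min W")
    case True
    then have "\<theta> \<le> x n" "\<theta> \<le> y n" for n using Min_le[OF fW xW] Min_le[OF fW yW] by (auto intro: order_trans)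
    then show ?thesis by simp
  next
    case False
    have co_ge: "\<theta> \<le> co W x y n \<longleftrightarrow> (\<exists>t\<in>fl W x y n. t \<le> y n \<and> \<theta> \<le> t)" for n
      using out_ge_iff[OF fW fl_sub] False by (simp add: co_def)
    have "{n. \<theta> \<le> co W x y n} \<subseteq> {n. \<theta> \<le> y n}" using co_ge by auto
    then have infy: "infinite {n. \<theta> \<le> y n}" using inf finite_subset by blast
    have infx: "infinite {n. \<theta> \<le> x n}"
    proof
      assume "finite {n. \<theta> \<le> x n}"
      then obtain N where "{n. \<theta> \<le> x n} \<subseteq> {..<N}" using finite_nat_bounded by blast
      then have N: "\<And>n. n \<ge> N \<Longrightarrow> x n < \<theta>" by (auto simp: subset_eq not_le)
      define Fire where "Fire t = {n. N \<le> n \<and> t \<in> fl W x y n \<and> t \<le> y n}" for t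
      have c1: "t \<in> fl W x y n" if "t \<in> fl W x y (Suc n)" "n \<ge> N" "\<theta> \<le> t" for t n
        using that N[of n] by (auto simp: upd_def)
      have c2: "t \<notin> fl W x y (Suc n)" if "t \<in> fl W x y n" "t \<le> y n" for t n
        using that by (auto simp: upd_def)
      have finF: "finite (Fire t)" if "\<theta> \<le> t" for t
      proof (cases "Fire t = {}")
        case False
        then obtain n0 where n0: "n0 \<in> Fire t" by auto
        have out: "t \<notin> fl W x y (Suc n0 + k)" for k
        proof (induction k)
          case 0 then show ?case using n0 c2 by (simp add: Fire_def)
        next
          case (Suc k)
          then show ?case using c1[of t "Suc n0 + k"] n0 that by (auto simp: Fire_def)
        qed
        have "Fire t \<subseteq> {..n0}"
        proof
          fix m assume m: "m \<in> Fire t"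
          show "m \<in> {..n0}"
          proof (rule ccontr)
            assume "m \<notin> {..n0}"
            then have "m = Suc n0 + (m - Suc n0)" by simp
            then have "t \<notin> fl W x y m" using out[of "m - Suc n0"] by simp
            then show False using m by (simp add: Fire_def)
          qed
        qed
        then show ?thesis by (rule finite_subset) simp
      qed simp
      have "{n. \<theta> \<le> co W x y n} \<subseteq> {..<N} \<union> (\<Union>t\<in>{t\<in>W. \<theta> \<le> t}. Fire t)"
      proof
        fix n assume "n \<in> {n. \<theta> \<le> co W x y n}"
        then obtain t where "t \<in> fl W x y n" "t \<le> y n" "\<theta> \<le> t" using co_ge by auto
        moreover then have "t \<in> W" using fl_sub by blast
        ultimately show "n \<in> {..<N} \<union> (\<Union>t\<in>{t\<in>W. \<theta> \<le> t}. Fire t)"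
          by (cases "n < N") (auto simp: Fire_def)
      qed
      moreover have "finite ({..<N} \<union> (\<Union>t\<in>{t\<in>W. \<theta> \<le> t}. Fire t))"
        using fW finF by auto
      ultimately show False using inf finite_subset by blast
    qed
    show ?thesis using infx infy by simp
  qed
next
  assume a: "infinite {n. \<theta> \<le> x n} \<and> infinite {n. \<theta> \<le> y n}"
  have "infinite {n. \<theta> \<in> fl W x y n \<and> \<theta> \<le> y n}"
  proof
    assume "finite {n. \<theta> \<in> fl W x y n \<and> \<theta> \<le> y n}"
    then obtain N where "{n. \<theta> \<in> fl W x y n \<and> \<theta> \<le> y n} \<subseteq> {..<N}" using finite_nat_bounded by blast
    then have N: "\<And>n. n \<ge> N \<Longrightarrow> \<not> (\<theta> \<in> fl W x y n \<and> \<theta> \<le> y n)" by (auto simp: subset_eq)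
    have "\<exists>n\<ge>N. \<theta> \<le> x n" using a by (simp add: infinite_nat_iff_unbounded_le)
    then obtain n1 where n1: "n1 \<ge> N" "\<theta> \<le> x n1" by blast
    have in1: "\<theta> \<in> fl W x y (Suc n1)" using n1 N[of n1] th by (auto simp: upd_def)
    have stay: "\<theta> \<in> fl W x y (Suc n1 + k)" for k
    proof (induction k)
      case 0 then show ?case using in1 by simp
    next
      case (Suc k)
      have "\<not> \<theta> \<le> y (Suc n1 + k)" using N[of "Suc n1 + k"] Suc n1 by auto
      then show ?case using Suc th by (auto simp: upd_def)
    qed
    have "\<forall>m\<ge>Suc n1. \<not> \<theta> \<le> y m"
    proof (intro allI impI)
      fix m assume "m \<ge> Suc n1"
      then have "m = Suc n1 + (m - Suc n1)" by simp
      then have "\<theta> \<in> fl W x y m" using stay[of "m - Suc n1"] by simp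
      then show "\<not> \<theta> \<le> y m" using N[of m] \<open>m \<ge> Suc n1\<close> n1 by auto
    qed
    moreover have "\<exists>n\<ge>Suc n1. \<theta> \<le> y n" using a by (simp add: infinite_nat_iff_unbounded_le)
    ultimately show False by blast
  qed
  moreover have "{n. \<theta> \<in> fl W x y n \<and> \<theta> \<le> y n} \<subseteq> {n. \<theta> \<le> co W x y n}"
    using out_ge_iff[OF fW fl_sub] by (auto simp: co_def)
  ultimately show "infinite {n. \<theta> \<le> co W x y n}" using finite_subset by blast
qed

lemma co_P:
  assumes fW: "finite W" and neW: "W \<noteq> {}" and xW: "\<And>n. x n \<in> W" and yW: "\<And>n. y n \<in> W"
    and P: "\<And>a b. P a \<Longrightarrow> a \<le> b \<Longrightarrow> P b"
  shows "infinite {n. P (co W x y n)} \<longleftrightarrow> infinite {n. P (x n)} \<and> infinite {n. P (y n)}"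
proof (cases "\<exists>t\<in>W. P t")
  case True
  let ?T = "{t\<in>W. P t}"
  define \<theta> where "\<theta> = Min ?T"
  have fT: "finite ?T" using fW by simp
  have neT: "?T \<noteq> {}" using True by auto
  have "\<theta> \<in> ?T" unfolding \<theta>_def by (rule Min_in[OF fT neT])
  then have thW: "\<theta> \<in> W" and Pth: "P \<theta>" by simp_all
  have eq: "P z \<longleftrightarrow> \<theta> \<le> z" if "z \<in> W" for z
  proof
    assume "P z" then have "z \<in> ?T" using that by simp
    then show "\<theta> \<le> z" unfolding \<theta>_def by (rule Min_le[OF fT])
  next
    assume "\<theta> \<le> z" then show "P z" by (rule P[OF Pth])
  qed
  have "{n. P (co W x y n)} = {n. \<theta> \<le> co W x y n}" using eq co_in[OF fW neW] by auto
  moreover have "{n. P (x n)} = {n. \<theta> \<le> x n}" using eq xW by auto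
  moreover have "{n. P (y n)} = {n. \<theta> \<le> y n}" using eq yW by auto
  ultimately show ?thesis using co_core[OF fW neW xW yW thW] by simp
next
  case False
  then have "{n. P (co W x y n)} = {}" "{n. P (x n)} = {}"
    using co_in[OF fW neW, of x y] xW by blast+
  then show ?thesis by simp
qed

definition enc :: "nat \<Rightarrow> nat \<Rightarrow> rat set \<Rightarrow> nat" where
  "enc q1 q2 F = to_nat (q1, q2, sorted_list_of_set F)"

definition dec :: "nat \<Rightarrow> nat \<times> nat \<times> rat set" where
  "dec z = (case from_nat z :: nat \<times> nat \<times> rat list of (q1, q2, l) \<Rightarrow> (q1, q2, set l))"

lemma dec_enc[simp]: "finite F \<Longrightarrow> dec (enc q1 q2 F) = (q1, q2, F)"
  by (simp add: dec_def enc_def)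

lemma enc_inj: "enc q1 q2 F = enc q1' q2' F' \<Longrightarrow> finite F \<Longrightarrow> finite F' \<Longrightarrow> q1 = q1' \<and> q2 = q2' \<and> F = F'"
  by (metis dec_enc prod.inject)

lemma enc_inj12: "enc q1 q2 F = enc q1' q2' F' \<Longrightarrow> q1 = q1' \<and> q2 = q2'"
  unfolding enc_def by (metis prod.inject to_nat_split)

definition WW :: "rat \<Rightarrow> 'a pwa \<Rightarrow> 'a pwa \<Rightarrow> rat set" where
  "WW s A1 A2 = insert 0 ((\<lambda>(q,a,q'). s * wt A1 q a q') ` (states A1 \<times> UNIV \<times> states A1) \<union>
                         (\<lambda>(q,a,q'). s * wt A2 q a q') ` (states A2 \<times> UNIV \<times> states A2))"

lemma WW_fin: "wf_pwa A1 \<Longrightarrow> wf_pwa A2 \<Longrightarrow> finite (WW s A1 A2 :: rat set)"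
  for A1 A2 :: "'a::finite pwa"
  unfolding WW_def wf_pwa_def by auto

lemma WW_ne: "WW s A1 A2 \<noteq> {}" by (simp add: WW_def)

lemma WW1: "q \<in> states A1 \<Longrightarrow> q' \<in> states A1 \<Longrightarrow> s * wt A1 q a q' \<in> WW s A1 A2"
  unfolding WW_def by (intro insertI2 UnI1) (auto intro!: image_eqI[where x="(q,a,q')"])

lemma WW2: "q \<in> states A2 \<Longrightarrow> q' \<in> states A2 \<Longrightarrow> s * wt A2 q a q' \<in> WW s A1 A2"
  unfolding WW_def by (intro insertI2 UnI2) (auto intro!: image_eqI[where x="(q,a,q')"])

definition PA :: "rat \<Rightarrow> 'a pwa \<Rightarrow> 'a pwa \<Rightarrow> 'a pwa" where
  "PA s A1 A2 = (let W = WW s A1 A2 in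
     \<lparr> states = (\<lambda>(q1,q2,F). enc q1 q2 F) ` (states A1 \<times> states A2 \<times> Pow W),
       init = map_pmf (\<lambda>(q1,q2). enc q1 q2 {}) (pair_pmf (init A1) (init A2)),
       trans = (\<lambda>z a. case dec z of (q1,q2,F) \<Rightarrow>
          map_pmf (\<lambda>(q1',q2'). enc q1' q2' (upd W F (s * wt A1 q1 a q1') (s * wt A2 q2 a q2')))
            (pair_pmf (trans A1 q1 a) (trans A2 q2 a))),
       wt = (\<lambda>z a z'. case dec z of (q1,q2,F) \<Rightarrow> case dec z' of (q1',q2',_) \<Rightarrow>
           s * out W F (s * wt A2 q2 a q2')) \<rparr>)"

lemma PA_wf:
  fixes A1 A2 :: "'a::finite pwa"
  assumes w1: "wf_pwa A1" and w2: "wf_pwa A2"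
  shows "wf_pwa (PA s A1 A2)"
proof -
  let ?W = "WW s A1 A2"
  have fW: "finite ?W" using WW_fin[OF w1 w2] .
  have "finite (states (PA s A1 A2))"
    using w1 w2 fW by (simp add: PA_def Let_def wf_pwa_def)
  moreover have "set_pmf (init (PA s A1 A2)) \<subseteq> states (PA s A1 A2)"
  proof
    fix z assume "z \<in> set_pmf (init (PA s A1 A2))"
    then obtain a b where ab: "a \<in> set_pmf (init A1)" "b \<in> set_pmf (init A2)" "z = enc a b {}"
      by (auto simp: PA_def Let_def)
    then have "(a, b, {}) \<in> states A1 \<times> states A2 \<times> Pow ?W" using w1 w2 by (auto simp: wf_pwa_def)
    then show "z \<in> states (PA s A1 A2)" unfolding ab(3) by (force simp: PA_def Let_def)
  qed
  moreover have "set_pmf (trans (PA s A1 A2) z a) \<subseteq> states (PA s A1 A2)" if z: "z \<in> states (PA s A1 A2)" for z a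
  proof -
    obtain q1 q2 F where q: "q1 \<in> states A1" "q2 \<in> states A2" "F \<subseteq> ?W" and zq: "z = enc q1 q2 F"
      using z by (auto simp: PA_def Let_def)
    have fF: "finite F" using q(3) fW finite_subset by blast
    show ?thesis
    proof
      fix z' assume "z' \<in> set_pmf (trans (PA s A1 A2) z a)"
      then obtain a' b' where ab: "a' \<in> set_pmf (trans A1 q1 a)" "b' \<in> set_pmf (trans A2 q2 a)"
        "z' = enc a' b' (upd ?W F (s * wt A1 q1 a a') (s * wt A2 q2 a b'))"
        by (auto simp: PA_def Let_def zq fF)
      have "a' \<in> states A1" using w1 q(1) ab(1) unfolding wf_pwa_def by blast
      moreover have "b' \<in> states A2" using w2 q(2) ab(2) unfolding wf_pwa_def by blast
      ultimately have "(a', b', upd ?W F (s * wt A1 q1 a a') (s * wt A2 q2 a b')) \<in> states A1 \<times> states A2 \<times> Pow ?W"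
        by (auto simp: upd_sub)
      then show "z' \<in> states (PA s A1 A2)" unfolding ab(3) by (force simp: PA_def Let_def)
    qed
  qed
  ultimately show ?thesis unfolding wf_pwa_def by blast
qed

definition XX :: "rat \<Rightarrow> 'a pwa \<Rightarrow> (nat \<Rightarrow> 'a) \<Rightarrow> (nat \<Rightarrow> nat) \<Rightarrow> nat \<Rightarrow> rat" where
  "XX s A w r n = s * wseq A w r n"

definition FLw where
  "FLw s A1 A2 w r1 r2 n = fl (WW s A1 A2) (XX s A1 w r1) (XX s A2 w r2) n"

definition Phi :: "rat \<Rightarrow> 'a pwa \<Rightarrow> 'a pwa \<Rightarrow> (nat \<Rightarrow> 'a) \<Rightarrow> (nat \<Rightarrow> nat) \<Rightarrow> (nat \<Rightarrow> nat) \<Rightarrow> nat \<Rightarrow> nat" where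
  "Phi s A1 A2 w r1 r2 n = enc (r1 n) (r2 n) (FLw s A1 A2 w r1 r2 n)"

lemma FLw_0[simp]: "FLw s A1 A2 w r1 r2 0 = {}" by (simp add: FLw_def)

lemma FLw_Suc: "FLw s A1 A2 w r1 r2 (Suc n) = upd (WW s A1 A2) (FLw s A1 A2 w r1 r2 n)
   (s * wt A1 (r1 n) (w n) (r1 (Suc n))) (s * wt A2 (r2 n) (w n) (r2 (Suc n)))"
  by (simp add: FLw_def XX_def wseq_def)

lemma FLw_sub: "FLw s A1 A2 w r1 r2 n \<subseteq> WW s A1 A2" by (simp add: FLw_def fl_sub)

lemma FLw_fin:
  fixes A1 A2 :: "'a::finite pwa"
  assumes "wf_pwa A1" "wf_pwa A2"
  shows "finite (FLw s A1 A2 w r1 r2 n)"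
  by (rule finite_subset[OF FLw_sub WW_fin[OF assms]])

lemma wseq_Phi:
  fixes A1 A2 :: "'a::finite pwa"
  assumes "wf_pwa A1" "wf_pwa A2"
  shows "wseq (PA s A1 A2) w (Phi s A1 A2 w r1 r2) n = s * co (WW s A1 A2) (XX s A1 w r1) (XX s A2 w r2) n"
proof -
  have d1: "dec (Phi s A1 A2 w r1 r2 n) = (r1 n, r2 n, FLw s A1 A2 w r1 r2 n)"
    using FLw_fin[OF assms, of s w r1 r2 n] by (simp add: Phi_def)
  have d2: "dec (Phi s A1 A2 w r1 r2 (Suc n)) = (r1 (Suc n), r2 (Suc n), FLw s A1 A2 w r1 r2 (Suc n))"
    using FLw_fin[OF assms, of s w r1 r2 "Suc n"] by (simp add: Phi_def)
  have wtP: "wt (PA s A1 A2) z a z' = (case dec z of (q1,q2,F) \<Rightarrow> case dec z' of (q1',q2',_) \<Rightarrow>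
           s * out (WW s A1 A2) F (s * wt A2 q2 a q2'))" for z a z'
    by (simp add: PA_def Let_def)
  have "wseq (PA s A1 A2) w (Phi s A1 A2 w r1 r2) n = s * out (WW s A1 A2) (FLw s A1 A2 w r1 r2 n) (s * wt A2 (r2 n) (w n) (r2 (Suc n)))"
    unfolding wseq_def wtP d1 d2 by simp
  also have "\<dots> = s * co (WW s A1 A2) (XX s A1 w r1) (XX s A2 w r2) n"
    unfolding co_def FLw_def XX_def wseq_def ..
  finally show ?thesis .
qed

lemma FLw_prefix:
  "(\<forall>i\<le>n. r1 i = a i \<and> r2 i = b i) \<Longrightarrow> FLw s A1 A2 w r1 r2 n = FLw s A1 A2 w a b n"
proof (induction n)
  case 0 then show ?case by simp
next
  case (Suc n)
  then have "FLw s A1 A2 w r1 r2 n = FLw s A1 A2 w a b n" by simp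
  moreover have "r1 n = a n" "r2 n = b n" "r1 (Suc n) = a (Suc n)" "r2 (Suc n) = b (Suc n)"
    using Suc.prems by auto
  ultimately show ?case by (simp add: FLw_Suc)
qed

lemma Phi_prefix:
  "(\<forall>i\<le>n. r1 i = a i \<and> r2 i = b i) \<Longrightarrow> i \<le> n \<Longrightarrow> Phi s A1 A2 w r1 r2 i = Phi s A1 A2 w a b i"
  unfolding Phi_def using FLw_prefix[of i r1 a r2 b s A1 A2 w] by auto

lemma Phi_cyl:
  "Phi s A1 A2 w r1 r2 \<in> cyl n (Phi s A1 A2 w a b) \<longleftrightarrow> r1 \<in> cyl n a \<and> r2 \<in> cyl n b"
proof
  assume "Phi s A1 A2 w r1 r2 \<in> cyl n (Phi s A1 A2 w a b)"
  then have "\<forall>i\<le>n. r1 i = a i \<and> r2 i = b i"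
    by (auto simp: cyl_def Phi_def dest: enc_inj12)
  then show "r1 \<in> cyl n a \<and> r2 \<in> cyl n b" by (simp add: cyl_def)
next
  assume "r1 \<in> cyl n a \<and> r2 \<in> cyl n b"
  then have "\<forall>i\<le>n. r1 i = a i \<and> r2 i = b i" by (simp add: cyl_def)
  then show "Phi s A1 A2 w r1 r2 \<in> cyl n (Phi s A1 A2 w a b)"
    using Phi_prefix by (auto simp: cyl_def)
qed

definition PK where "PK s A1 A2 w = (\<lambda>i q. trans (PA s A1 A2) q (w i))"

lemma cylp_Suc: "cylp p K (Suc n) qs = cylp p K n qs * pmf (K n (qs n)) (qs (Suc n))"
  by (simp add: cylp_def)

lemma inj_enc0: "inj (\<lambda>(q1, q2). enc q1 q2 {})"
  by (auto simp: inj_on_def dest: enc_inj12)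

lemma inj_enc_upd: "inj (\<lambda>(q1', q2'). enc q1' q2' (G q1' q2'))"
  by (auto simp: inj_on_def dest: enc_inj12)

lemma PA_trans_Phi:
  fixes A1 A2 :: "'a::finite pwa"
  assumes w: "wf_pwa A1" "wf_pwa A2"
  shows "trans (PA s A1 A2) (Phi s A1 A2 w a b n) (w n) =
     map_pmf (\<lambda>(q1',q2'). enc q1' q2' (upd (WW s A1 A2) (FLw s A1 A2 w a b n) (s * wt A1 (a n) (w n) q1') (s * wt A2 (b n) (w n) q2')))
            (pair_pmf (trans A1 (a n) (w n)) (trans A2 (b n) (w n)))"
  using FLw_fin[OF w, of s w a b n] by (simp add: PA_def Let_def Phi_def)

lemma cylp_cons:
  fixes A1 A2 :: "'a::finite pwa"
  assumes w: "wf_pwa A1" "wf_pwa A2"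
  shows "cylp (init (PA s A1 A2)) (PK s A1 A2 w) n (Phi s A1 A2 w a b) =
     cylp (init A1) (\<lambda>i q. trans A1 q (w i)) n a * cylp (init A2) (\<lambda>i q. trans A2 q (w i)) n b"
proof (induction n)
  case 0
  have "pmf (init (PA s A1 A2)) (Phi s A1 A2 w a b 0) = pmf (map_pmf (\<lambda>(q1, q2). enc q1 q2 {}) (pair_pmf (init A1) (init A2))) ((\<lambda>(q1, q2). enc q1 q2 {}) (a 0, b 0))"
    by (simp add: PA_def Let_def Phi_def)
  also have "\<dots> = pmf (init A1) (a 0) * pmf (init A2) (b 0)"
    by (subst pmf_map_inj'[OF inj_enc0]) (simp add: pmf_pair)
  finally show ?case by (simp add: cylp_def)
next
  case (Suc n)
  have "Phi s A1 A2 w a b (Suc n) = (\<lambda>(q1',q2'). enc q1' q2' (upd (WW s A1 A2) (FLw s A1 A2 w a b n) (s * wt A1 (a n) (w n) q1') (s * wt A2 (b n) (w n) q2'))) (a (Suc n), b (Suc n))"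
    by (simp add: Phi_def FLw_Suc)
  then have "pmf (PK s A1 A2 w n (Phi s A1 A2 w a b n)) (Phi s A1 A2 w a b (Suc n)) =
     pmf (trans A1 (a n) (w n)) (a (Suc n)) * pmf (trans A2 (b n) (w n)) (b (Suc n))"
    unfolding PK_def PA_trans_Phi[OF w]
    by (simp only: pmf_map_inj'[OF inj_enc_upd] pmf_pair)
  then show ?case using Suc by (simp add: cylp_Suc)
qed

definition cons where "cons s A1 A2 w n qs \<longleftrightarrow> (\<exists>a b. \<forall>i\<le>n. qs i = Phi s A1 A2 w a b i)"

lemma cylp_nz_cons:
  fixes A1 A2 :: "'a::finite pwa"
  assumes w: "wf_pwa A1" "wf_pwa A2"
  shows "cylp (init (PA s A1 A2)) (PK s A1 A2 w) n qs \<noteq> 0 \<Longrightarrow> cons s A1 A2 w n qs"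
proof (induction n)
  case 0
  then have "pmf (init (PA s A1 A2)) (qs 0) \<noteq> 0" by (simp add: cylp_def)
  then have "qs 0 \<in> set_pmf (init (PA s A1 A2))" by (simp add: set_pmf_eq)
  then obtain a0 b0 where "qs 0 = enc a0 b0 {}" by (auto simp: PA_def Let_def)
  then have "\<forall>i\<le>0. qs i = Phi s A1 A2 w (\<lambda>_. a0) (\<lambda>_. b0) i" by (simp add: Phi_def)
  then show ?case unfolding cons_def by blast
next
  case (Suc n)
  then have nz: "cylp (init (PA s A1 A2)) (PK s A1 A2 w) n qs \<noteq> 0"
     and nz2: "pmf (PK s A1 A2 w n (qs n)) (qs (Suc n)) \<noteq> 0" by (auto simp: cylp_Suc)
  obtain a b where ab: "\<forall>i\<le>n. qs i = Phi s A1 A2 w a b i" using Suc.IH[OF nz] by (auto simp: cons_def)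
  have "qs (Suc n) \<in> set_pmf (trans (PA s A1 A2) (Phi s A1 A2 w a b n) (w n))"
    using nz2 ab by (simp add: set_pmf_eq PK_def)
  then obtain q1' q2' where q': "qs (Suc n) = enc q1' q2' (upd (WW s A1 A2) (FLw s A1 A2 w a b n) (s * wt A1 (a n) (w n) q1') (s * wt A2 (b n) (w n) q2'))"
    unfolding PA_trans_Phi[OF w] by auto
  define a' where "a' = a(Suc n := q1')"
  define b' where "b' = b(Suc n := q2')"
  have pre: "\<forall>i\<le>n. a' i = a i \<and> b' i = b i" by (simp add: a'_def b'_def)
  have "\<forall>i\<le>Suc n. qs i = Phi s A1 A2 w a' b' i"
  proof (intro allI impI)
    fix i assume "i \<le> Suc n"
    then consider "i \<le> n" | "i = Suc n" by linarith
    then show "qs i = Phi s A1 A2 w a' b' i"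
    proof cases
      case 1 then show ?thesis using ab Phi_prefix[OF pre 1, of s A1 A2 w] by simp
    next
      case 2
      have "FLw s A1 A2 w a' b' n = FLw s A1 A2 w a b n" using FLw_prefix[OF pre, of s A1 A2 w] .
      then show ?thesis using 2 q' by (simp add: Phi_def FLw_Suc a'_def b'_def)
    qed
  qed
  then show ?case unfolding cons_def by blast
qed

lemma meas_cs_pair:
  fixes f :: "'m \<Rightarrow> 'b::countable" and g :: "'m \<Rightarrow> 'c::countable"
  assumes f: "f \<in> M \<rightarrow>\<^sub>M count_space UNIV" and g: "g \<in> M \<rightarrow>\<^sub>M count_space UNIV"
  shows "(\<lambda>x. (f x, g x)) \<in> M \<rightarrow>\<^sub>M count_space UNIV"
proof -
  have "(\<lambda>x. (\<lambda>i x. (i, g x)) (f x) x) \<in> M \<rightarrow>\<^sub>M count_space UNIV"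
  proof (rule measurable_compose_countable'[OF _ f])
    fix i :: 'b
    have "(\<lambda>j. (i, j)) \<in> count_space UNIV \<rightarrow>\<^sub>M (count_space UNIV :: ('b \<times> 'c) measure)" by simp
    then show "(\<lambda>x. (i, g x)) \<in> M \<rightarrow>\<^sub>M count_space UNIV" by (rule measurable_compose[OF g])
  qed simp
  then show ?thesis by simp
qed

lemma meas_cs_app:
  assumes f: "f \<in> M \<rightarrow>\<^sub>M count_space UNIV"
  shows "(\<lambda>x. h (f x)) \<in> M \<rightarrow>\<^sub>M count_space UNIV"
proof -
  have "h \<in> count_space UNIV \<rightarrow>\<^sub>M count_space UNIV" by simp
  then show ?thesis by (rule measurable_compose[OF f])
qed

lemma coord_SP: "(\<lambda>r. r n) \<in> SP \<rightarrow>\<^sub>M count_space UNIV"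
  unfolding SP_def using measurable_component_singleton[of n UNIV "\<lambda>_. count_space UNIV"] by simp

lemma coord_fst: "(\<lambda>p. fst p n) \<in> SP \<Otimes>\<^sub>M SP \<rightarrow>\<^sub>M count_space UNIV"
  by (rule measurable_compose[OF measurable_fst coord_SP])

lemma coord_snd: "(\<lambda>p. snd p n) \<in> SP \<Otimes>\<^sub>M SP \<rightarrow>\<^sub>M count_space UNIV"
  by (rule measurable_compose[OF measurable_snd coord_SP])

definition FLL where "FLL s A1 A2 w n p = sorted_list_of_set (FLw s A1 A2 w (fst p) (snd p) n)"

lemma FLL_meas:
  fixes A1 A2 :: "'a::finite pwa"
  assumes wf: "wf_pwa A1" "wf_pwa A2"
  shows "FLL s A1 A2 w n \<in> SP \<Otimes>\<^sub>M SP \<rightarrow>\<^sub>M count_space UNIV"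
proof (induction n)
  case 0
  have e: "FLL s A1 A2 w 0 = (\<lambda>p. [])" by (rule ext) (simp add: FLL_def)
  show ?case unfolding e by (rule measurable_const) simp
next
  case (Suc n)
  define H where "H = (\<lambda>(l, a, a', b, b'). sorted_list_of_set (upd (WW s A1 A2) (set l) (s * wt A1 a (w n) a') (s * wt A2 b (w n) b')))"
  have eq: "FLL s A1 A2 w (Suc n) p = H (FLL s A1 A2 w n p, fst p n, fst p (Suc n), snd p n, snd p (Suc n))" for p
    using FLw_fin[OF wf, of s w "fst p" "snd p" n] by (simp add: FLL_def H_def FLw_Suc)
  have "(\<lambda>p. (FLL s A1 A2 w n p, fst p n, fst p (Suc n), snd p n, snd p (Suc n))) \<in> SP \<Otimes>\<^sub>M SP \<rightarrow>\<^sub>M count_space UNIV"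
    by (intro meas_cs_pair Suc coord_fst coord_snd)
  then have m: "(\<lambda>p. H (FLL s A1 A2 w n p, fst p n, fst p (Suc n), snd p n, snd p (Suc n))) \<in> SP \<Otimes>\<^sub>M SP \<rightarrow>\<^sub>M count_space UNIV"
    by (rule meas_cs_app)
  have e2: "FLL s A1 A2 w (Suc n) = (\<lambda>p. H (FLL s A1 A2 w n p, fst p n, fst p (Suc n), snd p n, snd p (Suc n)))"
    by (rule ext) (rule eq)
  show ?case unfolding e2 by (rule m)
qed

definition PhiP where "PhiP s A1 A2 w = (\<lambda>p. Phi s A1 A2 w (fst p) (snd p))"

lemma PhiP_meas:
  fixes A1 A2 :: "'a::finite pwa"
  assumes wf: "wf_pwa A1" "wf_pwa A2"
  shows "PhiP s A1 A2 w \<in> SP \<Otimes>\<^sub>M SP \<rightarrow>\<^sub>M SP"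
proof -
  have c: "(\<lambda>p. PhiP s A1 A2 w p n) \<in> SP \<Otimes>\<^sub>M SP \<rightarrow>\<^sub>M count_space UNIV" for n
  proof -
    have eq: "PhiP s A1 A2 w p n = (\<lambda>(a, b, l). enc a b (set l)) (fst p n, snd p n, FLL s A1 A2 w n p)" for p
      using FLw_fin[OF wf, of s w "fst p" "snd p" n] by (simp add: PhiP_def Phi_def FLL_def)
    have "(\<lambda>p. (fst p n, snd p n, FLL s A1 A2 w n p)) \<in> SP \<Otimes>\<^sub>M SP \<rightarrow>\<^sub>M count_space UNIV"
      by (intro meas_cs_pair coord_fst coord_snd FLL_meas wf)
    then show ?thesis unfolding eq by (rule meas_cs_app)
  qed
  have "(\<lambda>p n. PhiP s A1 A2 w p n) \<in> SP \<Otimes>\<^sub>M SP \<rightarrow>\<^sub>M PiM UNIV (\<lambda>_. count_space UNIV)"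
    by (rule measurable_PiM_single'[OF c]) (simp add: PiE_UNIV_domain)
  then show ?thesis by (simp add: SP_def)
qed

lemma pair_Times:
  assumes "prob_space M1" "prob_space M2" "A \<in> sets M1" "B \<in> sets M2"
  shows "measure (M1 \<Otimes>\<^sub>M M2) (A \<times> B) = measure M1 A * measure M2 B"
proof -
  interpret M2: prob_space M2 by fact
  have "emeasure (M1 \<Otimes>\<^sub>M M2) (A \<times> B) = emeasure M1 A * emeasure M2 B"
    using assms by (intro M2.emeasure_pair_measure_Times)
  then show ?thesis unfolding measure_def by (simp only: enn2real_mult)
qed

lemma cylp_cong: "(\<And>i. i \<le> n \<Longrightarrow> qs i = qs' i) \<Longrightarrow> cylp p K n qs = cylp p K n qs'"
  unfolding cylp_def by (intro arg_cong2[where f="(*)"] prod.cong) auto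

lemma spec_D:
  fixes A1 A2 :: "'a::finite pwa"
  assumes wf: "wf_pwa A1" "wf_pwa A2"
  shows "spec (init (PA s A1 A2)) (PK s A1 A2 w) (distr (run_prob A1 w \<Otimes>\<^sub>M run_prob A2 w) SP (PhiP s A1 A2 w))"
proof -
  let ?M1 = "run_prob A1 w" and ?M2 = "run_prob A2 w"
  let ?N = "?M1 \<Otimes>\<^sub>M ?M2"
  have s1: "spec (init A1) (\<lambda>i q. trans A1 q (w i)) ?M1" by (rule spec_run_prob)
  have s2: "spec (init A2) (\<lambda>i q. trans A2 q (w i)) ?M2" by (rule spec_run_prob)
  have P1: "prob_space ?M1" and sM1: "sets ?M1 = sets SP" using s1 by (auto simp: spec_def)
  have P2: "prob_space ?M2" and sM2: "sets ?M2 = sets SP" using s2 by (auto simp: spec_def)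
  have meas: "PhiP s A1 A2 w \<in> ?N \<rightarrow>\<^sub>M SP"
  proof -
    have "measurable ?N SP = measurable (SP \<Otimes>\<^sub>M SP) SP"
      by (rule measurable_cong_sets[OF sets_pair_measure_cong[OF sM1 sM2] refl])
    then show ?thesis using PhiP_meas[OF wf, of s w] by simp
  qed
  have spN: "space ?N = UNIV"
    using sets_eq_imp_space_eq[OF sM1] sets_eq_imp_space_eq[OF sM2] by (simp add: space_pair_measure)
  have PN: "prob_space ?N" by (rule prob_space_pair[OF P1 P2])
  have "prob_space (distr ?N SP (PhiP s A1 A2 w))"
    by (rule prob_space.prob_space_distr[OF PN meas])
  moreover have "measure (distr ?N SP (PhiP s A1 A2 w)) (cyl n qs) = cylp (init (PA s A1 A2)) (PK s A1 A2 w) n qs" for n qs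
  proof -
    have "measure (distr ?N SP (PhiP s A1 A2 w)) (cyl n qs) = measure ?N (PhiP s A1 A2 w -` cyl n qs)"
      using measure_distr[OF meas cyl_sets] spN by simp
    also have "\<dots> = cylp (init (PA s A1 A2)) (PK s A1 A2 w) n qs"
    proof (cases "cons s A1 A2 w n qs")
      case True
      then obtain a b where ab: "\<forall>i\<le>n. qs i = Phi s A1 A2 w a b i" by (auto simp: cons_def)
      have cq: "cyl n qs = cyl n (Phi s A1 A2 w a b)" using ab by (auto simp: cyl_def)
      have "PhiP s A1 A2 w -` cyl n qs = cyl n a \<times> cyl n b"
        unfolding cq by (auto simp: PhiP_def Phi_cyl)
      then have "measure ?N (PhiP s A1 A2 w -` cyl n qs) = measure ?M1 (cyl n a) * measure ?M2 (cyl n b)"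
        using pair_Times[OF P1 P2, of "cyl n a" "cyl n b"] sM1 sM2 by simp
      also have "\<dots> = cylp (init A1) (\<lambda>i q. trans A1 q (w i)) n a * cylp (init A2) (\<lambda>i q. trans A2 q (w i)) n b"
        using s1 s2 by (simp add: spec_def)
      also have "\<dots> = cylp (init (PA s A1 A2)) (PK s A1 A2 w) n (Phi s A1 A2 w a b)"
        by (rule cylp_cons[OF wf, symmetric])
      also have "\<dots> = cylp (init (PA s A1 A2)) (PK s A1 A2 w) n qs"
        using ab by (intro cylp_cong) simp
      finally show ?thesis .
    next
      case False
      have "PhiP s A1 A2 w -` cyl n qs = {}"
      proof (rule ccontr)
        assume "PhiP s A1 A2 w -` cyl n qs \<noteq> {}"
        then obtain p where "PhiP s A1 A2 w p \<in> cyl n qs" by blast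
        then have "\<forall>i\<le>n. qs i = Phi s A1 A2 w (fst p) (snd p) i" by (auto simp: cyl_def PhiP_def)
        then show False using False by (auto simp: cons_def)
      qed
      moreover have "cylp (init (PA s A1 A2)) (PK s A1 A2 w) n qs = 0"
        using cylp_nz_cons[OF wf] False by blast
      ultimately show ?thesis by simp
    qed
    finally show ?thesis .
  qed
  ultimately show ?thesis by (simp add: spec_def)
qed

lemma run_prob_PA:
  fixes A1 A2 :: "'a::finite pwa"
  assumes wf: "wf_pwa A1" "wf_pwa A2"
  shows "run_prob (PA s A1 A2) w = distr (run_prob A1 w \<Otimes>\<^sub>M run_prob A2 w) SP (PhiP s A1 A2 w)"
proof -
  have "spec (init (PA s A1 A2)) (PK s A1 A2 w) (run_prob (PA s A1 A2) w)"
    unfolding PK_def by (rule spec_run_prob)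
  then show ?thesis by (rule spec_unique[OF _ spec_D[OF wf]])
qed

lemma wseq_meas: "(\<lambda>r. ereal (real_of_rat (wseq A w r n))) \<in> borel_measurable SP"
proof -
  have "(\<lambda>r. (\<lambda>(a, b). wt A a (w n) b) (r n, r (Suc n))) \<in> SP \<rightarrow>\<^sub>M count_space UNIV"
    by (rule meas_cs_app[OF meas_cs_pair[OF coord_SP coord_SP]])
  then have m: "(\<lambda>r. wseq A w r n) \<in> SP \<rightarrow>\<^sub>M count_space UNIV" by (simp add: wseq_def)
  have "(\<lambda>q. ereal (real_of_rat q)) \<in> count_space UNIV \<rightarrow>\<^sub>M borel" by simp
  then show ?thesis by (rule measurable_compose[OF m])
qed

lemma LSV_meas: "(\<lambda>r. LimSupV (wseq A w r)) \<in> borel_measurable SP"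
  unfolding LimSupV_def by (rule borel_measurable_limsup) (rule wseq_meas)

lemma LIV_meas: "(\<lambda>r. LimInfV (wseq A w r)) \<in> borel_measurable SP"
  unfolding LimInfV_def by (rule borel_measurable_liminf) (rule wseq_meas)

lemma ge_sets:
  assumes "g \<in> borel_measurable M" "space M = UNIV"
  shows "{r. (c::ereal) \<le> g r} \<in> sets M"
proof -
  have "g -` {c..} \<inter> space M \<in> sets M" by (rule measurable_sets[OF assms(1)]) simp
  moreover have "g -` {c..} \<inter> space M = {r. c \<le> g r}" using assms(2) by auto
  ultimately show ?thesis by simp
qed

lemma ES_sets: "{r. c \<le> LimSupV (wseq A w r)} \<in> sets SP"
  by (rule ge_sets[OF LSV_meas]) simp

lemma EI_sets: "{r. c \<le> LimInfV (wseq A w r)} \<in> sets SP"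
  by (rule ge_sets[OF LIV_meas]) simp

lemma AE_pair_both:
  assumes P1: "prob_space M1" and P2: "prob_space M2"
    and a1: "AE x in M1. P x" and a2: "AE y in M2. Q y"
    and m1: "{x\<in>space M1. \<not> P x} \<in> sets M1" and m2: "{y\<in>space M2. \<not> Q y} \<in> sets M2"
  shows "AE p in M1 \<Otimes>\<^sub>M M2. P (fst p) \<and> Q (snd p)"
proof -
  interpret M2: prob_space M2 by fact
  interpret M1: prob_space M1 by fact
  let ?N1 = "{x\<in>space M1. \<not> P x}" and ?N2 = "{y\<in>space M2. \<not> Q y}"
  have z1: "emeasure M1 ?N1 = 0" using a1 m1 by (simp add: AE_iff_measurable)
  have z2: "emeasure M2 ?N2 = 0" using a2 m2 by (simp add: AE_iff_measurable)
  have "emeasure (M1 \<Otimes>\<^sub>M M2) (?N1 \<times> space M2) = 0"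
    using M2.emeasure_pair_measure_Times[OF m1 sets.top] z1 by simp
  moreover have "emeasure (M1 \<Otimes>\<^sub>M M2) (space M1 \<times> ?N2) = 0"
    using M2.emeasure_pair_measure_Times[OF sets.top m2] z2 by simp
  ultimately have "?N1 \<times> space M2 \<union> space M1 \<times> ?N2 \<in> null_sets (M1 \<Otimes>\<^sub>M M2)"
    using m1 m2 by (intro null_sets.Un) (auto intro!: null_setsI)
  then show ?thesis
    by (rule AE_I') (auto simp: space_pair_measure)
qed

lemma fin_range_ereal:
  assumes "\<And>n. z n \<in> W" "finite W"
  shows "finite (range (\<lambda>n. ereal (real_of_rat (z n))))"
proof -
  have "range (\<lambda>n. ereal (real_of_rat (z n))) \<subseteq> (\<lambda>q. ereal (real_of_rat q)) ` W" using assms(1) by auto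
  then show ?thesis by (rule finite_subset) (simp add: assms(2))
qed

lemma LSV_iff:
  assumes "\<And>n. z n \<in> W" "finite W"
  shows "ereal \<eta> \<le> LimSupV z \<longleftrightarrow> infinite {n. \<eta> \<le> real_of_rat (z n)}"
  unfolding LimSupV_def limsup_fin_iff[OF fin_range_ereal[OF assms]] freq_seq_iff by simp

lemma LIV_iff:
  assumes "\<And>n. z n \<in> W" "finite W"
  shows "ereal \<eta> \<le> LimInfV z \<longleftrightarrow> finite {n. \<not> \<eta> \<le> real_of_rat (z n)}"
  unfolding LimInfV_def liminf_fin_iff[OF fin_range_ereal[OF assms]] ev_seq_iff by simp

lemma XX_in1: "\<forall>n. r n \<in> states A1 \<Longrightarrow> XX s A1 w r n \<in> WW s A1 A2"
  unfolding XX_def wseq_def by (rule WW1) auto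

lemma XX_in2: "\<forall>n. r n \<in> states A2 \<Longrightarrow> XX s A2 w r n \<in> WW s A1 A2"
  unfolding XX_def wseq_def by (rule WW2) auto

lemma pos_point:
  fixes A1 A2 :: "'a::finite pwa"
  assumes wf: "wf_pwa A1" "wf_pwa A2" and g1: "\<forall>n. r1 n \<in> states A1" and g2: "\<forall>n. r2 n \<in> states A2"
  shows "ereal \<eta> \<le> LimSupV (wseq (PA 1 A1 A2) w (Phi 1 A1 A2 w r1 r2)) \<longleftrightarrow>
         ereal \<eta> \<le> LimSupV (wseq A1 w r1) \<and> ereal \<eta> \<le> LimSupV (wseq A2 w r2)"
proof -
  let ?W = "WW 1 A1 A2" and ?X = "XX 1 A1 w r1" and ?Y = "XX 1 A2 w r2"
  have fW: "finite ?W" by (rule WW_fin[OF wf])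
  have xW: "\<And>n. ?X n \<in> ?W" using XX_in1[OF g1] .
  have yW: "\<And>n. ?Y n \<in> ?W" using XX_in2[OF g2] .
  have eq: "wseq (PA 1 A1 A2) w (Phi 1 A1 A2 w r1 r2) = co ?W ?X ?Y"
    by (rule ext) (simp add: wseq_Phi[OF wf])
  have X: "?X = wseq A1 w r1" and Y: "?Y = wseq A2 w r2" by (auto simp: XX_def fun_eq_iff)
  have P: "\<eta> \<le> real_of_rat b" if "\<eta> \<le> real_of_rat a" "a \<le> b" for a b
    using that of_rat_less_eq[of a b] by (smt (verit))
  have "ereal \<eta> \<le> LimSupV (co ?W ?X ?Y) \<longleftrightarrow> infinite {n. \<eta> \<le> real_of_rat (co ?W ?X ?Y n)}"
    by (rule LSV_iff[OF co_in[OF fW WW_ne] fW])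
  also have "\<dots> \<longleftrightarrow> infinite {n. \<eta> \<le> real_of_rat (?X n)} \<and> infinite {n. \<eta> \<le> real_of_rat (?Y n)}"
    by (rule co_P[OF fW WW_ne xW yW, where P="\<lambda>t. \<eta> \<le> real_of_rat t"]) (rule P)
  also have "\<dots> \<longleftrightarrow> ereal \<eta> \<le> LimSupV ?X \<and> ereal \<eta> \<le> LimSupV ?Y"
    using LSV_iff[OF xW fW] LSV_iff[OF yW fW] by simp
  finally show ?thesis unfolding eq X Y .
qed

lemma as_point:
  fixes A1 A2 :: "'a::finite pwa"
  assumes wf: "wf_pwa A1" "wf_pwa A2" and g1: "\<forall>n. r1 n \<in> states A1" and g2: "\<forall>n. r2 n \<in> states A2"
  shows "ereal \<eta> \<le> LimInfV (wseq (PA (-1) A1 A2) w (Phi (-1) A1 A2 w r1 r2)) \<longleftrightarrow>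
         ereal \<eta> \<le> LimInfV (wseq A1 w r1) \<or> ereal \<eta> \<le> LimInfV (wseq A2 w r2)"
proof -
  let ?W = "WW (-1) A1 A2" and ?X = "XX (-1) A1 w r1" and ?Y = "XX (-1) A2 w r2"
  let ?W' = "uminus ` ?W"
  have fW: "finite ?W" by (rule WW_fin[OF wf])
  have fW': "finite ?W'" using fW by simp
  have xW: "\<And>n. ?X n \<in> ?W" using XX_in1[OF g1] .
  have yW: "\<And>n. ?Y n \<in> ?W" using XX_in2[OF g2] .
  have eq: "wseq (PA (-1) A1 A2) w (Phi (-1) A1 A2 w r1 r2) = (\<lambda>n. - co ?W ?X ?Y n)"
    by (rule ext) (simp add: wseq_Phi[OF wf])
  have X: "wseq A1 w r1 = (\<lambda>n. - ?X n)" and Y: "wseq A2 w r2 = (\<lambda>n. - ?Y n)" by (auto simp: XX_def fun_eq_iff)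
  have cW': "\<And>n. - co ?W ?X ?Y n \<in> ?W'" using co_in[OF fW WW_ne] by simp
  have xW': "\<And>n. - ?X n \<in> ?W'" using xW by simp
  have yW': "\<And>n. - ?Y n \<in> ?W'" using yW by simp
  have P: "- \<eta> < real_of_rat b" if "- \<eta> < real_of_rat a" "a \<le> b" for a b
    using that of_rat_less_eq[of a b] by (smt (verit))
  have neg: "(\<not> \<eta> \<le> real_of_rat (- t)) \<longleftrightarrow> - \<eta> < real_of_rat t" for t
    by (simp add: of_rat_minus) linarith
  have "ereal \<eta> \<le> LimInfV (\<lambda>n. - co ?W ?X ?Y n) \<longleftrightarrow> finite {n. \<not> \<eta> \<le> real_of_rat (- co ?W ?X ?Y n)}"
    by (rule LIV_iff[OF cW' fW'])
  also have "\<dots> \<longleftrightarrow> finite {n. - \<eta> < real_of_rat (co ?W ?X ?Y n)}" by (simp only: neg)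
  also have "\<dots> \<longleftrightarrow> finite {n. - \<eta> < real_of_rat (?X n)} \<or> finite {n. - \<eta> < real_of_rat (?Y n)}"
  proof -
    have "infinite {n. - \<eta> < real_of_rat (co ?W ?X ?Y n)} \<longleftrightarrow> infinite {n. - \<eta> < real_of_rat (?X n)} \<and> infinite {n. - \<eta> < real_of_rat (?Y n)}"
      by (rule co_P[OF fW WW_ne xW yW, where P="\<lambda>t. - \<eta> < real_of_rat t"]) (rule P)
    then show ?thesis by blast
  qed
  also have "\<dots> \<longleftrightarrow> finite {n. \<not> \<eta> \<le> real_of_rat (- ?X n)} \<or> finite {n. \<not> \<eta> \<le> real_of_rat (- ?Y n)}"
    by (simp only: neg)
  also have "\<dots> \<longleftrightarrow> ereal \<eta> \<le> LimInfV (\<lambda>n. - ?X n) \<or> ereal \<eta> \<le> LimInfV (\<lambda>n. - ?Y n)"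
    using LIV_iff[OF xW' fW'] LIV_iff[OF yW' fW'] by simp
  finally show ?thesis unfolding eq X Y .
qed

lemma wf_AE:
  fixes A :: "'a pwa"
  assumes "wf_pwa A"
  shows "AE r in run_prob A w. \<forall>n. r n \<in> states A"
  using assms by (intro spec_AE[OF spec_run_prob]) (auto simp: wf_pwa_def)

lemma good_sets: "{r\<in>space SP. \<not> (\<forall>n. r n \<in> S)} \<in> sets SP"
  unfolding SP_def by measurable

lemma prod_common:
  fixes A1 A2 :: "'a::finite pwa"
  assumes wf: "wf_pwa A1" "wf_pwa A2"
    and E: "E \<in> sets SP" and E1: "E1 \<in> sets SP" and E2: "E2 \<in> sets SP"
    and pt: "\<And>r1 r2. \<forall>n. r1 n \<in> states A1 \<Longrightarrow> \<forall>n. r2 n \<in> states A2 \<Longrightarrow>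
               Phi s A1 A2 w r1 r2 \<in> E \<longleftrightarrow> (r1, r2) \<in> E12"
    and E12: "E12 \<in> sets (SP \<Otimes>\<^sub>M SP)"
  shows "measure (run_prob (PA s A1 A2) w) E = measure (run_prob A1 w \<Otimes>\<^sub>M run_prob A2 w) E12"
proof -
  let ?M1 = "run_prob A1 w" and ?M2 = "run_prob A2 w"
  let ?N = "?M1 \<Otimes>\<^sub>M ?M2"
  have s1: "spec (init A1) (\<lambda>i q. trans A1 q (w i)) ?M1" by (rule spec_run_prob)
  have s2: "spec (init A2) (\<lambda>i q. trans A2 q (w i)) ?M2" by (rule spec_run_prob)
  have P1: "prob_space ?M1" and sM1: "sets ?M1 = sets SP" using s1 by (auto simp: spec_def)
  have P2: "prob_space ?M2" and sM2: "sets ?M2 = sets SP" using s2 by (auto simp: spec_def)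
  have sN: "sets ?N = sets (SP \<Otimes>\<^sub>M SP)" by (rule sets_pair_measure_cong[OF sM1 sM2])
  have meas: "PhiP s A1 A2 w \<in> ?N \<rightarrow>\<^sub>M SP"
  proof -
    have "measurable ?N SP = measurable (SP \<Otimes>\<^sub>M SP) SP"
      by (rule measurable_cong_sets[OF sN refl])
    then show ?thesis using PhiP_meas[OF wf, of s w] by simp
  qed
  have spM1: "space ?M1 = UNIV" using sets_eq_imp_space_eq[OF sM1] by simp
  have spM2: "space ?M2 = UNIV" using sets_eq_imp_space_eq[OF sM2] by simp
  have spN: "space ?N = UNIV" by (simp add: space_pair_measure spM1 spM2)
  have "measure (run_prob (PA s A1 A2) w) E = measure ?N (PhiP s A1 A2 w -` E \<inter> space ?N)"
    unfolding run_prob_PA[OF wf] by (rule measure_distr[OF meas E])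
  also have "\<dots> = measure ?N E12"
  proof (rule measure_eq_AE)
    have g1: "{x\<in>space ?M1. \<not> (\<forall>n. x n \<in> states A1)} \<in> sets ?M1"
      unfolding sM1 using good_sets[of "states A1"] spM1 by simp
    have g2: "{x\<in>space ?M2. \<not> (\<forall>n. x n \<in> states A2)} \<in> sets ?M2"
      unfolding sM2 using good_sets[of "states A2"] spM2 by simp
    have "AE p in ?N. (\<forall>n. fst p n \<in> states A1) \<and> (\<forall>n. snd p n \<in> states A2)"
      by (rule AE_pair_both[OF P1 P2 wf_AE[OF wf(1)] wf_AE[OF wf(2)] g1 g2])
    then show "AE p in ?N. p \<in> PhiP s A1 A2 w -` E \<inter> space ?N \<longleftrightarrow> p \<in> E12"
    proof (rule AE_mp, intro AE_I2 impI)
      fix p :: "(nat \<Rightarrow> nat) \<times> (nat \<Rightarrow> nat)" assume "(\<forall>n. fst p n \<in> states A1) \<and> (\<forall>n. snd p n \<in> states A2)"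
      then show "p \<in> PhiP s A1 A2 w -` E \<inter> space ?N \<longleftrightarrow> p \<in> E12"
        using pt[of "fst p" "snd p"] by (simp add: PhiP_def spN)
    qed
    show "PhiP s A1 A2 w -` E \<inter> space ?N \<in> sets ?N" by (rule measurable_sets[OF meas E])
    show "E12 \<in> sets ?N" using E12 sN by simp
  qed
  finally show ?thesis .
qed

lemma pos_prod:
  fixes A1 A2 :: "'a::finite pwa"
  assumes wf: "wf_pwa A1" "wf_pwa A2"
  shows "measure (run_prob (PA 1 A1 A2) w) {r. ereal \<eta> \<le> LimSupV (wseq (PA 1 A1 A2) w r)} =
    measure (run_prob A1 w) {r. ereal \<eta> \<le> LimSupV (wseq A1 w r)} * measure (run_prob A2 w) {r. ereal \<eta> \<le> LimSupV (wseq A2 w r)}"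
proof -
  let ?E1 = "{r. ereal \<eta> \<le> LimSupV (wseq A1 w r)}" and ?E2 = "{r. ereal \<eta> \<le> LimSupV (wseq A2 w r)}"
  have s1: "spec (init A1) (\<lambda>i q. trans A1 q (w i)) (run_prob A1 w)" by (rule spec_run_prob)
  have s2: "spec (init A2) (\<lambda>i q. trans A2 q (w i)) (run_prob A2 w)" by (rule spec_run_prob)
  have P1: "prob_space (run_prob A1 w)" and sM1: "sets (run_prob A1 w) = sets SP" using s1 by (auto simp: spec_def)
  have P2: "prob_space (run_prob A2 w)" and sM2: "sets (run_prob A2 w) = sets SP" using s2 by (auto simp: spec_def)
  have "measure (run_prob (PA 1 A1 A2) w) {r. ereal \<eta> \<le> LimSupV (wseq (PA 1 A1 A2) w r)} =
     measure (run_prob A1 w \<Otimes>\<^sub>M run_prob A2 w) (?E1 \<times> ?E2)"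
    by (rule prod_common[OF wf ES_sets ES_sets ES_sets _ pair_measureI[OF ES_sets ES_sets]]) (auto simp: pos_point[OF wf])
  also have "\<dots> = measure (run_prob A1 w) ?E1 * measure (run_prob A2 w) ?E2"
    by (rule pair_Times[OF P1 P2]) (auto simp: sM1 sM2 ES_sets)
  finally show ?thesis .
qed

lemma as_prod:
  fixes A1 A2 :: "'a::finite pwa"
  assumes wf: "wf_pwa A1" "wf_pwa A2"
  shows "measure (run_prob (PA (-1) A1 A2) w) {r. ereal \<eta> \<le> LimInfV (wseq (PA (-1) A1 A2) w r)} = 1 \<longleftrightarrow>
    measure (run_prob A1 w) {r. ereal \<eta> \<le> LimInfV (wseq A1 w r)} = 1 \<or> measure (run_prob A2 w) {r. ereal \<eta> \<le> LimInfV (wseq A2 w r)} = 1"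
proof -
  let ?E1 = "{r. ereal \<eta> \<le> LimInfV (wseq A1 w r)}" and ?E2 = "{r. ereal \<eta> \<le> LimInfV (wseq A2 w r)}"
  let ?C = "(UNIV - ?E1) \<times> (UNIV - ?E2)"
  let ?N = "run_prob A1 w \<Otimes>\<^sub>M run_prob A2 w"
  have s1: "spec (init A1) (\<lambda>i q. trans A1 q (w i)) (run_prob A1 w)" by (rule spec_run_prob)
  have s2: "spec (init A2) (\<lambda>i q. trans A2 q (w i)) (run_prob A2 w)" by (rule spec_run_prob)
  have P1: "prob_space (run_prob A1 w)" and sM1: "sets (run_prob A1 w) = sets SP" using s1 by (auto simp: spec_def)
  have P2: "prob_space (run_prob A2 w)" and sM2: "sets (run_prob A2 w) = sets SP" using s2 by (auto simp: spec_def)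
  have spM1: "space (run_prob A1 w) = UNIV" using sets_eq_imp_space_eq[OF sM1] by simp
  have spM2: "space (run_prob A2 w) = UNIV" using sets_eq_imp_space_eq[OF sM2] by simp
  have spN: "space ?N = UNIV" by (simp add: space_pair_measure spM1 spM2)
  interpret PN: prob_space ?N by (rule prob_space_pair[OF P1 P2])
  interpret Q1: prob_space "run_prob A1 w" by (rule P1)
  interpret Q2: prob_space "run_prob A2 w" by (rule P2)
  have c1: "UNIV - ?E1 \<in> sets SP" by (metis EI_sets sets.compl_sets space_SP)
  have c2: "UNIV - ?E2 \<in> sets SP" by (metis EI_sets sets.compl_sets space_SP)
  have CS: "UNIV - ?C \<in> sets (SP \<Otimes>\<^sub>M SP)"
  proof -
    have "?C \<in> sets (SP \<Otimes>\<^sub>M SP)" using c1 c2 by (rule pair_measureI)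
    then have "space (SP \<Otimes>\<^sub>M SP) - ?C \<in> sets (SP \<Otimes>\<^sub>M SP)" by (rule sets.compl_sets)
    then show ?thesis by (simp add: space_pair_measure)
  qed
  have CN: "?C \<in> sets ?N" using c1 c2 sM1 sM2 by (intro pair_measureI) auto
  have "measure (run_prob (PA (-1) A1 A2) w) {r. ereal \<eta> \<le> LimInfV (wseq (PA (-1) A1 A2) w r)} =
     measure ?N (UNIV - ?C)"
    by (rule prod_common[OF wf EI_sets EI_sets EI_sets _ CS]) (auto simp: as_point[OF wf])
  also have "\<dots> = 1 - measure ?N ?C"
    using PN.prob_compl[OF CN] spN by simp
  also have "measure ?N ?C = measure (run_prob A1 w) (UNIV - ?E1) * measure (run_prob A2 w) (UNIV - ?E2)"
    by (rule pair_Times[OF P1 P2]) (auto simp: sM1 sM2 c1 c2)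
  also have "measure (run_prob A1 w) (UNIV - ?E1) = 1 - measure (run_prob A1 w) ?E1"
  proof -
    have e1: "?E1 \<in> sets (run_prob A1 w)" using EI_sets[of "ereal \<eta>" A1 w] sM1 by simp
    show ?thesis using Q1.prob_compl[OF e1] spM1 by simp
  qed
  also have "measure (run_prob A2 w) (UNIV - ?E2) = 1 - measure (run_prob A2 w) ?E2"
  proof -
    have e2: "?E2 \<in> sets (run_prob A2 w)" using EI_sets[of "ereal \<eta>" A2 w] sM2 by simp
    show ?thesis using Q2.prob_compl[OF e2] spM2 by simp
  qed
  finally show ?thesis by simp
qed

lemma Sup_inter_down:
  fixes D1 D2 :: "real set"
  assumes d1: "\<And>x y. x \<in> D1 \<Longrightarrow> y \<le> x \<Longrightarrow> y \<in> D1"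
      and d2: "\<And>x y. x \<in> D2 \<Longrightarrow> y \<le> x \<Longrightarrow> y \<in> D2"
  shows "Sup (ereal ` (D1 \<inter> D2)) = min (Sup (ereal ` D1)) (Sup (ereal ` D2))"
proof (rule antisym)
  show "Sup (ereal ` (D1 \<inter> D2)) \<le> min (Sup (ereal ` D1)) (Sup (ereal ` D2))"
    by (intro min.boundedI Sup_subset_mono image_mono) auto
  show "min (Sup (ereal ` D1)) (Sup (ereal ` D2)) \<le> Sup (ereal ` (D1 \<inter> D2))"
  proof (rule dense_le)
    fix x assume x: "x < min (Sup (ereal ` D1)) (Sup (ereal ` D2))"
    then have "x < Sup (ereal ` D1)" "x < Sup (ereal ` D2)" by auto
    then obtain a b where a: "a \<in> D1" "x < ereal a" and b: "b \<in> D2" "x < ereal b"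
      by (auto simp: less_Sup_iff)
    have "min a b \<in> D1" using d1[OF a(1)] by simp
    moreover have "min a b \<in> D2" using d2[OF b(1)] by simp
    ultimately have "min a b \<in> D1 \<inter> D2" by simp
    then have "ereal (min a b) \<in> ereal ` (D1 \<inter> D2)" by (rule imageI)
    then have "ereal (min a b) \<le> Sup (ereal ` (D1 \<inter> D2))" by (rule Sup_upper)
    moreover have "x < ereal (min a b)" using a b by (simp add: min_def)
    ultimately show "x \<le> Sup (ereal ` (D1 \<inter> D2))" by (meson less_imp_le order_trans)
  qed
qed

lemma setform: "{ereal \<eta> | \<eta>. P \<eta>} = ereal ` {\<eta>. P \<eta>}" by auto

lemma meas_mono_down:
  fixes A :: "'a pwa"
  assumes "y \<le> x" and that: "{r. ereal y \<le> V (wseq A w r)} \<in> sets SP"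
  shows "measure (run_prob A w) {r. ereal x \<le> V (wseq A w r)} \<le> measure (run_prob A w) {r. ereal y \<le> V (wseq A w r)}"
proof -
  have s: "spec (init A) (\<lambda>i q. trans A q (w i)) (run_prob A w)" by (rule spec_run_prob)
  interpret prob_space "run_prob A w" using s by (simp add: spec_def)
  have "sets (run_prob A w) = sets SP" using s by (simp add: spec_def)
  moreover have yx: "ereal y \<le> ereal x" using assms(1) by simp
  ultimately show ?thesis using that
    by (intro finite_measure_mono) (auto intro: order_trans[OF yx])
qed

theorem lemma18:
  shows "(\<forall>A1 A2 :: ('a::finite) pwa. wf_pwa A1 \<and> wf_pwa A2 \<longrightarrow>
            (\<exists>A :: 'a pwa. wf_pwa A \<and> (\<forall>w. L_pos LimSupV A w =
               min (L_pos LimSupV A1 w) (L_pos LimSupV A2 w)))) \<and>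
         (\<forall>A1 A2 :: 'a pwa. wf_pwa A1 \<and> wf_pwa A2 \<longrightarrow>
            (\<exists>A :: 'a pwa. wf_pwa A \<and> (\<forall>w. L_as LimInfV A w =
               max (L_as LimInfV A1 w) (L_as LimInfV A2 w))))"
proof (intro conjI allI impI)
  fix A1 A2 :: "'a pwa" assume "wf_pwa A1 \<and> wf_pwa A2"
  then have wf: "wf_pwa A1" "wf_pwa A2" by auto
  show "\<exists>A :: 'a pwa. wf_pwa A \<and> (\<forall>w. L_pos LimSupV A w = min (L_pos LimSupV A1 w) (L_pos LimSupV A2 w))"
  proof (intro exI conjI allI)
    show "wf_pwa (PA 1 A1 A2)" by (rule PA_wf[OF wf])
    fix w
    define p1 where "p1 \<eta> = measure (run_prob A1 w) {r. ereal \<eta> \<le> LimSupV (wseq A1 w r)}" for \<eta>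
    define p2 where "p2 \<eta> = measure (run_prob A2 w) {r. ereal \<eta> \<le> LimSupV (wseq A2 w r)}" for \<eta>
    have nn1: "0 \<le> p1 \<eta>" for \<eta> by (simp add: p1_def)
    have nn2: "0 \<le> p2 \<eta>" for \<eta> by (simp add: p2_def)
    have m1: "p1 x \<le> p1 y" if "y \<le> x" for x y
      unfolding p1_def by (rule meas_mono_down[OF that ES_sets])
    have m2: "p2 x \<le> p2 y" if "y \<le> x" for x y
      unfolding p2_def by (rule meas_mono_down[OF that ES_sets])
    have "L_pos LimSupV (PA 1 A1 A2) w = Sup (ereal ` {\<eta>. 0 < p1 \<eta> * p2 \<eta>})"
      unfolding L_pos_def setform p1_def p2_def pos_prod[OF wf] ..
    also have "{\<eta>. 0 < p1 \<eta> * p2 \<eta>} = {\<eta>. 0 < p1 \<eta>} \<inter> {\<eta>. 0 < p2 \<eta>}"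
      using nn1 nn2 by (auto simp: zero_less_mult_iff) (metis antisym_conv1 not_less)+
    also have "Sup (ereal ` ({\<eta>. 0 < p1 \<eta>} \<inter> {\<eta>. 0 < p2 \<eta>})) = min (Sup (ereal ` {\<eta>. 0 < p1 \<eta>})) (Sup (ereal ` {\<eta>. 0 < p2 \<eta>}))"
      by (rule Sup_inter_down) (auto intro: less_le_trans[OF _ m1] less_le_trans[OF _ m2])
    also have "\<dots> = min (L_pos LimSupV A1 w) (L_pos LimSupV A2 w)"
      unfolding L_pos_def setform p1_def p2_def ..
    finally show "L_pos LimSupV (PA 1 A1 A2) w = min (L_pos LimSupV A1 w) (L_pos LimSupV A2 w)" .
  qed
next
  fix A1 A2 :: "'a pwa" assume "wf_pwa A1 \<and> wf_pwa A2"
  then have wf: "wf_pwa A1" "wf_pwa A2" by auto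
  show "\<exists>A :: 'a pwa. wf_pwa A \<and> (\<forall>w. L_as LimInfV A w = max (L_as LimInfV A1 w) (L_as LimInfV A2 w))"
  proof (intro exI conjI allI)
    show "wf_pwa (PA (-1) A1 A2)" by (rule PA_wf[OF wf])
    fix w
    have "L_as LimInfV (PA (-1) A1 A2) w =
       Sup (ereal ` ({\<eta>. measure (run_prob A1 w) {r. ereal \<eta> \<le> LimInfV (wseq A1 w r)} = 1} \<union>
                     {\<eta>. measure (run_prob A2 w) {r. ereal \<eta> \<le> LimInfV (wseq A2 w r)} = 1}))"
      unfolding L_as_def setform as_prod[OF wf] by (simp add: Collect_disj_eq)
    also have "\<dots> = max (L_as LimInfV A1 w) (L_as LimInfV A2 w)"
      unfolding L_as_def setform image_Un Sup_union_distrib sup_max ..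
    finally show "L_as LimInfV (PA (-1) A1 A2) w = max (L_as LimInfV A1 w) (L_as LimInfV A2 w)" .
  qed
qed


end
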